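(* Let $f\in\mathcal{B}$ be such that $f\colon\mathbb{R}\to\mathbb{R}$ is convex, $f\colon\mathbb{D}\to f(\mathbb{D})$ is a quadratic-like map and $f(0)\in(-\infty,-1)$. Then $f\colon f^{-1}(\mathbb{D})\cap\mathbb{D}\to\mathbb{D}$ is an escaping quadratic-like map, and its periodic points coincide with those of $f\colon\mathbb{R}\to\mathbb{R}$.
   Context: $\mathcal{B}$ is the real Banach space of real and even entire maps $f$ (i.e. $f(\bar z)=\overline{f(z)}$, $f(-z)=f(z)$) such that the sequence $(f^{(j)}(0))_{j\ge0}$ is bounded, with norm $\|f\|_{\mathcal{B}}=\sup_{j\ge0}|f^{(j)}(0)|$. $\mathbb{D}$ is the open unit disk. A quadratic-like map is a holomorphic proper map $f\colon V\to W$ of degree $2$ with $V,W$ nonempty simply connected open subsets of $\mathbb{C}$ and $V$ relatively compact in $W$. An escaping quadratic-like map is a holomorphic covering map $f\colon U\to V$ of degree $2$, where $U,V$ are nonempty open subsets of $\mathbb{C}$ with $U$ relatively compact in $V$ and $V$ simply connected. For a map $f\colon U\to V$ with $U\subseteq V$, a periodic point is a point $z\in U$ with $f^{\circ n}(z)=z$ for some $n\ge1$ and $z,f(z),\dots,f^{\circ(n-1)}(z)\in U$. *)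

theory Defs
  imports "HOL-Complex_Analysis.Complex_Analysis"
begin

definition in_B :: "(complex \<Rightarrow> complex) \<Rightarrow> bool" where
  "in_B f \<longleftrightarrow> f holomorphic_on UNIV
     \<and> (\<forall>z. f (cnj z) = cnj (f z))
     \<and> (\<forall>z. f (- z) = f z)
     \<and> bounded (range (\<lambda>j. (deriv ^^ j) f 0))"

definition real_restr :: "(complex \<Rightarrow> complex) \<Rightarrow> real \<Rightarrow> real" where
  "real_restr f x = Re (f (complex_of_real x))"

definition proper_map_on :: "(complex \<Rightarrow> complex) \<Rightarrow> complex set \<Rightarrow> complex set \<Rightarrow> bool" where
  "proper_map_on f V W \<longleftrightarrow> f ` V \<subseteq> W \<and>
     (\<forall>K. compact K \<and> K \<subseteq> W \<longrightarrow> compact {z \<in> V. f z \<in> K})"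

definition degree_two_on :: "(complex \<Rightarrow> complex) \<Rightarrow> complex set \<Rightarrow> complex set \<Rightarrow> bool" where
  "degree_two_on f V W \<longleftrightarrow> (\<forall>w \<in> W. finite {z \<in> V. f z = w} \<and>
     (\<Sum>z \<in> {z \<in> V. f z = w}. zorder (\<lambda>u. f u - w) z) = 2)"

definition quadratic_like :: "(complex \<Rightarrow> complex) \<Rightarrow> complex set \<Rightarrow> complex set \<Rightarrow> bool" where
  "quadratic_like f V W \<longleftrightarrow>
     V \<noteq> {} \<and> W \<noteq> {} \<and> open V \<and> open W \<and> simply_connected V \<and> simply_connected W \<and>
     compact (closure V) \<and> closure V \<subseteq> W \<and>
     f holomorphic_on V \<and> proper_map_on f V W \<and> degree_two_on f V W"

definition escaping_quadratic_like :: "(complex \<Rightarrow> complex) \<Rightarrow> complex set \<Rightarrow> complex set \<Rightarrow> bool" where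
  "escaping_quadratic_like f U V \<longleftrightarrow>
     U \<noteq> {} \<and> V \<noteq> {} \<and> open U \<and> open V \<and> simply_connected V \<and>
     compact (closure U) \<and> closure U \<subseteq> V \<and>
     f holomorphic_on U \<and> covering_space U f V \<and>
     (\<forall>w \<in> V. card {z \<in> U. f z = w} = 2)"

definition periodic_point :: "('a \<Rightarrow> 'a) \<Rightarrow> 'a set \<Rightarrow> 'a \<Rightarrow> bool" where
  "periodic_point f U z \<longleftrightarrow>
     z \<in> U \<and> (\<exists>n \<ge> 1. (f ^^ n) z = z \<and> (\<forall>k < n. (f ^^ k) z \<in> U))"

end

theory Submission
  imports Defs
begin


lemma fixpoint_unique:
  fixes G :: "complex \<Rightarrow> complex"
  assumes holG: "G holomorphic_on ball 0 1" and K: "compact K" "K \<subseteq> ball 0 1"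
    and GK: "G ` ball 0 1 \<subseteq> K" and p: "p \<in> ball 0 1" and q: "q \<in> ball 0 1"
    and Gp: "G p = p" and Gq: "G q = q"
  shows "p = q"
proof -
  define M where "M = Moebius_function 0 p"
  define Mi where "Mi = Moebius_function 0 (-p)"
  have np: "norm p < 1" using p by simp
  have holM: "M holomorphic_on ball 0 1" unfolding M_def by (rule Moebius_function_holomorphic[OF np])
  have holMi: "Mi holomorphic_on ball 0 1" unfolding Mi_def by (rule Moebius_function_holomorphic) (use np in simp)
  have Mi_in: "Mi z \<in> ball 0 1" if "z \<in> ball 0 1" for z
    using Moebius_function_norm_lt_1[of "-p" z 0] np that by (simp add: Mi_def)
  have Mi0: "Mi 0 = p" by (simp add: Mi_def Moebius_function_of_zero)
  have Mp: "M p = 0" by (simp add: M_def Moebius_function_eq_zero)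
  have MiM: "Mi (M z) = z" if "z \<in> ball 0 1" for z
    unfolding Mi_def M_def by (rule Moebius_function_compose) (use np that in auto)
  have KD: "K \<noteq> {}" using GK p by auto
  have contK: "continuous_on K (\<lambda>k. norm (M k))"
    using holM K(2) by (intro continuous_intros) (meson continuous_on_subset holomorphic_on_imp_continuous_on)
  have "compact ((\<lambda>k. norm (M k)) ` K)" by (rule compact_continuous_image[OF contK K(1)])
  then obtain m where m: "m \<in> (\<lambda>k. norm (M k)) ` K" and mmax: "\<And>y. y \<in> (\<lambda>k. norm (M k)) ` K \<Longrightarrow> y \<le> m"
    using compact_attains_sup[of "(\<lambda>k. norm (M k)) ` K"] KD by blast
  have m1: "m < 1"
    using m K(2) Moebius_function_norm_lt_1[of p _ 0] np by (auto simp: M_def)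
  have m0: "0 \<le> m" using m by auto
  define s where "s = (1 + m) / 2"
  have s: "m < s" "s < 1" "0 < s" using m1 m0 by (auto simp: s_def)
  define H where "H = (\<lambda>z. M (G (Mi z)) / of_real s)"
  have holH: "H holomorphic_on ball 0 1"
  proof -
    have "(G \<circ> Mi) holomorphic_on ball 0 1"
      by (rule holomorphic_on_compose_gen[OF holMi holG]) (use Mi_in in auto)
    moreover have "(G \<circ> Mi) ` ball 0 1 \<subseteq> ball 0 1" using GK K(2) Mi_in by (auto simp del: mem_ball_0 mem_ball)
    ultimately have "(M \<circ> (G \<circ> Mi)) holomorphic_on ball 0 1"
      by (intro holomorphic_on_compose_gen[OF _ holM]) auto
    then show ?thesis unfolding H_def using s
      by (intro holomorphic_intros) (auto simp: o_def)
  qed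
  have H0: "H 0 = 0" by (simp add: H_def Mi0 Gp Mp)
  have Hlt: "norm (H z) < 1" if "norm z < 1" for z
  proof -
    have "G (Mi z) \<in> K" using GK Mi_in that by auto
    then have "norm (M (G (Mi z))) \<le> m" using mmax by auto
    then show ?thesis using s by (simp add: H_def norm_divide)
  qed
  define \<xi> where "\<xi> = M q"
  have \<xi>1: "norm \<xi> < 1" unfolding \<xi>_def M_def using Moebius_function_norm_lt_1[of p q 0] np q by simp
  have "norm (H \<xi>) \<le> norm \<xi>" by (rule Schwarz_Lemma(1)[OF holH H0 Hlt \<xi>1])
  moreover have "H \<xi> = \<xi> / of_real s" unfolding H_def \<xi>_def using MiM q Gq by simp
  ultimately have "norm \<xi> / s \<le> norm \<xi>" using s by (simp add: norm_divide)
  then have "norm \<xi> \<le> s * norm \<xi>" using s by (simp add: field_simps)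
  then have "norm \<xi> = 0" using s by (metis mult_le_cancel_right1 norm_ge_zero order.not_eq_order_implies_strict not_less)
  then have "M q = 0" by (simp add: \<xi>_def)
  then show ?thesis using MiM[OF q] Mi0 by simp
qed


locale ql_setup =
  fixes f :: "complex \<Rightarrow> complex" and c :: real
  assumes hol: "f holomorphic_on UNIV"
    and fcnj: "\<And>z. f (cnj z) = cnj (f z)"
    and feven: "\<And>z. f (- z) = f z"
    and conv: "convex_on UNIV (real_restr f)"
    and ql: "quadratic_like f (ball 0 1) (f ` ball 0 1)"
    and f0: "f 0 = complex_of_real c" and c1: "c < -1"
begin

lemma cball_sub: "cball 0 1 \<subseteq> f ` ball 0 1"
  using ql closure_ball[of 1 "0::complex"] unfolding quadratic_like_def by auto

lemma ball_sub: "ball 0 1 \<subseteq> f ` ball 0 1"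
  using cball_sub by auto

lemma proper: "proper_map_on f (ball 0 1) (f ` ball 0 1)"
  using ql unfolding quadratic_like_def by auto

lemma deg: "degree_two_on f (ball 0 1) (f ` ball 0 1)"
  using ql unfolding quadratic_like_def by auto

lemma contf: "continuous_on S f"
  using hol holomorphic_on_imp_continuous_on holomorphic_on_subset by blast

lemma f_real: "f (complex_of_real x) = complex_of_real (real_restr f x)"
proof -
  have "cnj (f (complex_of_real x)) = f (complex_of_real x)"
    using fcnj[of "complex_of_real x"] by simp
  then show ?thesis unfolding real_restr_def by (metis Reals_cnj_iff of_real_Re)
qed

lemma f_imag: "f (\<i> * complex_of_real t) = complex_of_real (Re (f (\<i> * complex_of_real t)))"
proof -
  have "cnj (f (\<i> * complex_of_real t)) = f (\<i> * complex_of_real t)"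
    using fcnj[of "\<i> * complex_of_real t"] feven[of "\<i> * complex_of_real t"] by simp
  then show ?thesis by (metis Reals_cnj_iff of_real_Re)
qed

lemma g0: "real_restr f 0 = c"
  using f0 by (simp add: real_restr_def)

lemma g_even: "real_restr f (- x) = real_restr f x"
  using feven[of "complex_of_real x"] by (simp add: real_restr_def)

lemma f_ne_c: "\<exists>z. f z \<noteq> f 0"
proof -
  have "1 \<in> f ` ball 0 1" using cball_sub by auto
  then obtain z where "f z = 1" by auto
  then show ?thesis using f0 c1 by (intro exI[of _ z]) auto
qed

lemma nonconst: "frequently (\<lambda>u. f u - w \<noteq> 0) (at z)"
proof (rule ccontr)
  assume "\<not> ?thesis"
  then have "eventually (\<lambda>u. f u - w = 0) (at z)" by (simp add: not_frequently)
  then obtain d where d: "d > 0" "\<And>u. u \<noteq> z \<Longrightarrow> dist u z < d \<Longrightarrow> f u - w = 0"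
    unfolding eventually_at by blast
  have eq: "f u = (\<lambda>_. w) u" for u
  proof (rule analytic_continuation_open[of "ball z d - {z}" UNIV f "\<lambda>_. w"])
    show "ball z d - {z} \<noteq> {}"
    proof -
      have "z + of_real (d/2) \<in> ball z d - {z}" using d(1) by (auto simp: dist_norm)
      then show ?thesis by blast
    qed
    show "\<And>x. x \<in> ball z d - {z} \<Longrightarrow> f x = w"
      using d by (auto simp: dist_commute)
  qed (use hol in \<open>auto intro: holomorphic_intros\<close>)
  then show False using f_ne_c by auto
qed

lemma zorder_pos: "f z = w \<Longrightarrow> zorder (\<lambda>u. f u - w) z > 0"
  by (subst zorder_pos_iff[of _ UNIV]) (use hol nonconst in \<open>auto intro: holomorphic_intros\<close>)

lemma fiber_card:
  assumes "w \<in> f ` ball 0 1"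
  shows "finite {z \<in> ball 0 1. f z = w} \<and> card {z \<in> ball 0 1. f z = w} \<le> 2"
proof -
  let ?F = "{z \<in> ball 0 1. f z = w}"
  have fin: "finite ?F" and s: "(\<Sum>z \<in> ?F. zorder (\<lambda>u. f u - w) z) = 2"
    using deg assms unfolding degree_two_on_def by auto
  have "int (card ?F) = (\<Sum>z \<in> ?F. (1::int))" by simp
  also have "\<dots> \<le> (\<Sum>z \<in> ?F. zorder (\<lambda>u. f u - w) z)"
  proof (rule sum_mono)
    fix z assume "z \<in> ?F"
    then have "zorder (\<lambda>u. f u - w) z > 0" using zorder_pos by auto
    then show "1 \<le> zorder (\<lambda>u. f u - w) z" by simp
  qed
  finally show ?thesis using fin s by simp
qed

lemma three:
  assumes "a \<in> ball 0 1" "b \<in> ball 0 1" "e \<in> ball 0 1" "f a = w" "f b = w" "f e = w"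
    "a \<noteq> b" "a \<noteq> e" "b \<noteq> e"
  shows False
proof -
  have w: "w \<in> f ` ball 0 1" using assms by auto
  have sub: "{a, b, e} \<subseteq> {z \<in> ball 0 1. f z = w}" using assms by auto
  have "card {a, b, e} = 3" using assms by auto
  then have "3 \<le> card {z \<in> ball 0 1. f z = w}"
    using card_mono[OF _ sub] fiber_card[OF w] by metis
  then show False using fiber_card[OF w] by simp
qed

lemma fiber_pm:
  assumes "z \<in> ball 0 1" "f z \<noteq> f 0" "u \<in> ball 0 1" "f u = f z"
  shows "u = z \<or> u = - z"
proof (rule ccontr)
  assume "\<not> ?thesis"
  moreover have "z \<noteq> 0" using assms(2) by auto
  then have "z \<noteq> - z" by (auto simp: complex_eq_iff)
  moreover have "- z \<in> ball 0 1" using assms(1) by simp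
  ultimately show False using three[of z "-z" u "f z"] assms feven[of z] by auto
qed

lemma g_ge: "real_restr f x \<ge> c"
proof -
  have "real_restr f ((1 - 1/2) *\<^sub>R x + (1/2) *\<^sub>R (-x)) \<le> (1 - 1/2) * real_restr f x + (1/2) * real_restr f (-x)"
    by (rule convex_onD[OF conv]) auto
  then show ?thesis using g0 g_even[of x] by simp
qed

lemma g_gt: assumes "x \<noteq> 0" "\<bar>x\<bar> < 1" shows "real_restr f x > c"
proof (rule ccontr)
  assume "\<not> ?thesis"
  then have e: "real_restr f x = c" using g_ge[of x] by simp
  have "f (complex_of_real x) = f 0" using f_real[of x] e f0 by simp
  moreover have "f (- complex_of_real x) = f 0" using calculation feven by simp
  ultimately show False
    using three[of 0 "complex_of_real x" "- complex_of_real x" "f 0"] assms by auto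
qed

lemma imag_le: assumes "\<bar>t\<bar> < 1" shows "Re (f (\<i> * complex_of_real t)) \<le> c"
proof -
  define \<phi> where "\<phi> s = Re (f (\<i> * complex_of_real s))" for s
  have phi_even: "\<phi> (- s) = \<phi> s" for s
    using feven[of "\<i> * complex_of_real s"] by (simp add: \<phi>_def)
  have phi0: "\<phi> 0 = c" using f0 by (simp add: \<phi>_def)
  have "\<phi> \<bar>t\<bar> \<le> c"
  proof (rule ccontr)
    let ?t = "\<bar>t\<bar>"
    assume "\<not> \<phi> ?t \<le> c"
    then have pt: "\<phi> ?t > c" by simp
    define v where "v = min (\<phi> ?t) (real_restr f (1/2))"
    have vc: "v > c" using pt g_gt[of "1/2"] by (simp add: v_def)
    have contphi: "continuous_on {0..?t} \<phi>"
      unfolding \<phi>_def by (intro continuous_intros continuous_on_compose2[OF contf[of UNIV]]) auto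
    obtain s where s: "0 \<le> s" "s \<le> ?t" "\<phi> s = v"
      using IVT'[of \<phi> 0 v ?t] contphi phi0 vc by (force simp: v_def)
    have contg: "continuous_on {0..1/2} (real_restr f)"
      unfolding real_restr_def by (intro continuous_intros continuous_on_compose2[OF contf[of UNIV]]) auto
    obtain x where x: "0 \<le> x" "x \<le> 1/2" "real_restr f x = v"
      using IVT'[of "real_restr f" 0 v "1/2"] contg g0 vc by (force simp: v_def)
    have s0: "s \<noteq> 0" using s phi0 vc by auto
    have x0: "x \<noteq> 0" using x g0 vc by auto
    have e1: "f (complex_of_real x) = complex_of_real v" using f_real[of x] x by simp
    have e2: "f (- complex_of_real x) = complex_of_real v" using e1 feven by simp
    have e3: "f (\<i> * complex_of_real s) = complex_of_real v" using f_imag[of s] s by (simp add: \<phi>_def)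
    have n1: "complex_of_real x \<noteq> \<i> * complex_of_real s" using x0 by (simp add: complex_eq_iff)
    have n2: "- complex_of_real x \<noteq> \<i> * complex_of_real s" using x0 by (simp add: complex_eq_iff)
    have n3: "complex_of_real x \<noteq> - complex_of_real x" using x0 by (simp add: complex_eq_iff)
    have b1: "complex_of_real x \<in> ball 0 1" using x by simp
    have b2: "- complex_of_real x \<in> ball 0 1" using x by simp
    have b3: "\<i> * complex_of_real s \<in> ball 0 1" using s assms by (simp add: norm_mult)
    show False using three[OF b1 b2 b3 e1 e2 e3 n3 n1 n2] .
  qed
  then show ?thesis
    by (cases "t \<ge> 0") (use phi_even[of t] in \<open>auto simp: \<phi>_def\<close>)
qed

lemma imag_notin: assumes "\<bar>t\<bar> < 1" shows "f (\<i> * complex_of_real t) \<notin> cball 0 1"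
proof -
  have "Re (f (\<i> * complex_of_real t)) < -1" using imag_le[OF assms] c1 by simp
  then have "norm (f (\<i> * complex_of_real t)) > 1"
    using abs_Re_le_cmod[of "f (\<i> * complex_of_real t)"] by linarith
  then show ?thesis by simp
qed

lemma re_nz: assumes "z \<in> ball 0 1" "f z \<in> cball 0 1" shows "Re z \<noteq> 0"
proof
  assume "Re z = 0"
  then have "z = \<i> * complex_of_real (Im z)" by (simp add: complex_eq_iff)
  moreover have "\<bar>Im z\<bar> < 1" using assms(1) abs_Im_le_cmod[of z] by simp
  ultimately show False using imag_notin assms(2) by metis
qed

lemma x0_ex: "\<exists>x0. 0 < x0 \<and> x0 < 1 \<and> real_restr f x0 = 1"
proof -
  have "1 \<in> f ` ball 0 1" using cball_sub by auto
  then obtain z where z: "z \<in> ball 0 1" "f z = 1" by auto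
  have fz0: "f z \<noteq> f 0" using z f0 c1 by auto
  have Rz: "Re z \<noteq> 0" using re_nz z by simp
  have "cnj z = z \<or> cnj z = - z"
    using fiber_pm[OF z(1) fz0, of "cnj z"] z fcnj[of z] by simp
  then have "cnj z = z" using Rz by (auto simp: complex_eq_iff)
  then have zr: "z = complex_of_real (Re z)" by (metis Reals_cnj_iff of_real_Re)
  then have "real_restr f (Re z) = 1" using z(2) f_real[of "Re z"] by simp
  moreover have "\<bar>Re z\<bar> < 1" using z(1) abs_Re_le_cmod[of z] by simp
  ultimately show ?thesis using Rz g_even[of "Re z"]
    by (intro exI[of _ "\<bar>Re z\<bar>"]) (auto simp: abs_if)
qed

lemma g_big: assumes "1 \<le> \<bar>x\<bar>" shows "real_restr f x > \<bar>x\<bar>"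
proof -
  obtain x0 where x0: "0 < x0" "x0 < 1" "real_restr f x0 = 1" using x0_ex by blast
  let ?y = "\<bar>x\<bar>"
  have y: "?y \<ge> 1" using assms by simp
  define t where "t = x0 / ?y"
  have t: "0 \<le> t" "t \<le> 1" using x0 y by (auto simp: t_def)
  have "real_restr f ((1 - t) *\<^sub>R 0 + t *\<^sub>R ?y) \<le> (1 - t) * real_restr f 0 + t * real_restr f ?y"
    by (rule convex_onD[OF conv t]) auto
  moreover have "t * ?y = x0" using y by (simp add: t_def)
  ultimately have "1 \<le> (1 - t) * c + t * real_restr f ?y" using x0 g0 by simp
  then have "?y * 1 \<le> ?y * ((1 - t) * c + t * real_restr f ?y)" using y
    by (intro mult_left_mono) auto
  also have "\<dots> = (?y - x0) * c + x0 * real_restr f ?y" using y by (simp add: t_def field_simps)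

  finally have A: "?y \<le> (?y - x0) * c + x0 * real_restr f ?y" by simp
  have B: "(?y - x0) * c \<le> 0" using x0 y c1 by (intro mult_nonneg_nonpos) auto
  have C: "x0 * ?y < ?y" using mult_strict_right_mono[of x0 1 "\<bar>x\<bar>"] x0 y by linarith
  have "x0 * ?y < x0 * real_restr f ?y" using A B C by linarith
  then have "?y < real_restr f ?y" using x0 by simp
  moreover have "real_restr f ?y = real_restr f x" using g_even[of x] by (cases "x \<ge> 0") auto
  ultimately show ?thesis by simp
qed

end


primrec comp_list :: "(nat \<Rightarrow> 'a \<Rightarrow> 'a) \<Rightarrow> nat \<Rightarrow> 'a \<Rightarrow> 'a" where
  "comp_list F 0 = F 0"
| "comp_list F (Suc m) = comp_list F m \<circ> F (Suc m)"

context ql_setup begin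

definition U where "U = f -` ball 0 1 \<inter> ball 0 1"
definition H where "H b = U \<inter> {z. if b then Re z > 0 else Re z < 0}"

lemma U_open: "open U"
  unfolding U_def using contf[of UNIV] open_vimage by (intro open_Int) auto

lemma U_ne: "U \<noteq> {}"
proof -
  have "0 \<in> f ` ball 0 1" using cball_sub by auto
  then obtain z where "z \<in> ball 0 1" "f z = 0" by auto
  then have "z \<in> U" unfolding U_def by simp
  then show ?thesis by blast
qed

lemma U_closure: "compact (closure U) \<and> closure U \<subseteq> ball 0 1"
proof -
  define K where "K = {z \<in> ball 0 1. f z \<in> cball 0 1}"
  have pr: "\<forall>K. compact K \<and> K \<subseteq> f ` ball 0 1 \<longrightarrow> compact {z \<in> ball 0 1. f z \<in> K}"
    using proper unfolding proper_map_on_def by (elim conjE)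
  have "compact K" unfolding K_def using pr[rule_format, of "cball 0 1"] cball_sub compact_cball by blast
  moreover have "U \<subseteq> K" unfolding U_def K_def by (auto simp del: mem_ball_0 mem_cball_0)
  ultimately have "closure U \<subseteq> K" by (simp add: closure_minimal compact_imp_closed)
  moreover have "K \<subseteq> ball 0 1" unfolding K_def by blast
  moreover have "bounded U" unfolding U_def by (meson bounded_ball bounded_subset inf_le2)
  ultimately show ?thesis using compact_closure by blast
qed

lemma U_re: "z \<in> U \<Longrightarrow> Re z \<noteq> 0"
  unfolding U_def using re_nz by auto

lemma U_cnj: "z \<in> U \<Longrightarrow> cnj z \<in> U"
  unfolding U_def using fcnj[of z] by auto

lemma U_neg: "z \<in> U \<Longrightarrow> - z \<in> U"
  unfolding U_def using feven[of z] by auto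

lemma U_fiber:
  assumes "w \<in> ball 0 1"
  shows "\<exists>z. z \<in> U \<and> f z = w \<and> {u \<in> U. f u = w} = {z, - z} \<and> z \<noteq> - z"
proof -
  obtain z where z: "z \<in> ball 0 1" "f z = w" using assms ball_sub by auto
  have zU: "z \<in> U" using z assms unfolding U_def by auto
  have fz0: "f z \<noteq> f 0" using z assms f0 c1 by auto
  then have "z \<noteq> 0" by auto
  then have nz: "z \<noteq> - z" by (auto simp: complex_eq_iff)
  have "{u \<in> U. f u = w} = {z, - z}"
  proof
    show "{u \<in> U. f u = w} \<subseteq> {z, - z}"
      using fiber_pm[OF z(1) fz0] z(2) unfolding U_def by auto
    show "{z, - z} \<subseteq> {u \<in> U. f u = w}" using zU U_neg z feven[of z] by auto
  qed
  then show ?thesis using zU z nz by blast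
qed

lemma U_card: "w \<in> ball 0 1 \<Longrightarrow> card {z \<in> U. f z = w} = 2"
  using U_fiber by fastforce

lemma H_open: "open (H b)"
proof (cases b)
  case True
  then have "H b = U \<inter> {z. Re z > 0}" unfolding H_def by auto
  then show ?thesis using U_open open_halfspace_Re_gt[of 0] by (simp add: open_Int)
next
  case False
  then have "H b = U \<inter> {z. Re z < 0}" unfolding H_def by auto
  then show ?thesis using U_open open_halfspace_Re_lt[of 0] by (simp add: open_Int)
qed

lemma H_U: "H b \<subseteq> U" unfolding H_def by auto

lemma H_inj: "inj_on f (H b)"
proof (rule inj_onI)
  fix x y assume xy: "x \<in> H b" "y \<in> H b" "f x = f y"
  have x: "x \<in> ball 0 1" "f x \<in> ball 0 1" using xy(1) H_U unfolding U_def by blast+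
  have fz0: "f x \<noteq> f 0" using x f0 c1 by auto
  have "y \<in> ball 0 1" using xy(2) H_U unfolding U_def by blast
  then have "y = x \<or> y = - x" using fiber_pm[OF x(1) fz0, of y] xy by auto
  moreover have "y \<noteq> - x" using xy unfolding H_def by (cases b) auto
  ultimately show "x = y" by auto
qed

lemma H_img: "f ` H b = ball 0 1"
proof
  show "f ` H b \<subseteq> ball 0 1" using H_U unfolding U_def by auto
  show "ball 0 1 \<subseteq> f ` H b"
  proof
    fix w :: complex assume w: "w \<in> ball 0 1"
    obtain z where z: "z \<in> U" "f z = w" using U_fiber[OF w] by blast
    have "Re z \<noteq> 0" using U_re z by auto
    then have "z \<in> H b \<or> - z \<in> H b" using z U_neg unfolding H_def by (cases b) auto
    then show "w \<in> f ` H b" using z feven[of z] by (metis image_eqI)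
  qed
qed

lemma psi_ex1: "\<exists>g. g holomorphic_on ball 0 1 \<and> (\<forall>z\<in>H b. g (f z) = z) \<and>
   (\<forall>w\<in>ball 0 1. g w \<in> H b \<and> f (g w) = w)"
proof -
  obtain g where g: "g holomorphic_on (f ` H b)" "\<And>z. z \<in> H b \<Longrightarrow> g (f z) = z"
    using holomorphic_has_inverse[OF holomorphic_on_subset[OF hol] H_open H_inj] by blast
  have "\<forall>w\<in>ball 0 1. g w \<in> H b \<and> f (g w) = w"
  proof
    fix w :: complex assume "w \<in> ball 0 1"
    then obtain z where "z \<in> H b" "w = f z" using H_img by blast
    then show "g w \<in> H b \<and> f (g w) = w" using g by auto
  qed
  moreover have "g holomorphic_on ball 0 1" using g(1) H_img by simp
  ultimately show ?thesis using g(2) by blast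
qed

definition psi where "psi b = (SOME g. g holomorphic_on ball 0 1 \<and> (\<forall>z\<in>H b. g (f z) = z) \<and>
   (\<forall>w\<in>ball 0 1. g w \<in> H b \<and> f (g w) = w))"

lemma psi: "psi b holomorphic_on ball 0 1" "\<And>z. z \<in> H b \<Longrightarrow> psi b (f z) = z"
   "\<And>w. w \<in> ball 0 1 \<Longrightarrow> psi b w \<in> H b" "\<And>w. w \<in> ball 0 1 \<Longrightarrow> f (psi b w) = w"
proof -
  have P: "psi b holomorphic_on ball 0 1 \<and> (\<forall>z\<in>H b. psi b (f z) = z) \<and>
   (\<forall>w\<in>ball 0 1. psi b w \<in> H b \<and> f (psi b w) = w)"
    unfolding psi_def by (rule someI_ex[OF psi_ex1[of b]])
  show "psi b holomorphic_on ball 0 1" using P by blast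
  show "\<And>z. z \<in> H b \<Longrightarrow> psi b (f z) = z" using P by blast
  show "\<And>w. w \<in> ball 0 1 \<Longrightarrow> psi b w \<in> H b" using P by blast
  show "\<And>w. w \<in> ball 0 1 \<Longrightarrow> f (psi b w) = w" using P by blast
qed

lemma psi_D: "w \<in> ball 0 1 \<Longrightarrow> psi b w \<in> ball 0 1"
  using psi(3) H_U unfolding U_def by blast

lemma psi_U: "psi b ` ball 0 1 \<subseteq> U"
  using psi(3) H_U by blast

lemma psi_cnj: assumes "w \<in> ball 0 1" shows "psi b (cnj w) = cnj (psi b w)"
proof -
  have cw: "cnj w \<in> ball 0 1" using assms by simp
  have a: "psi b (cnj w) \<in> H b" "f (psi b (cnj w)) = cnj w" using psi(3)[OF cw] psi(4)[OF cw] by auto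
  have "psi b w \<in> H b" using psi(3)[OF assms] by auto
  then have b: "cnj (psi b w) \<in> H b" using U_cnj unfolding H_def by (cases b) auto
  have "f (cnj (psi b w)) = cnj w" using fcnj psi(4)[OF assms] by simp
  then have "f (psi b (cnj w)) = f (cnj (psi b w))" using a by simp
  then show ?thesis using a(1) b H_inj[of b] inj_onD by fastforce
qed

lemma cov: "covering_space U f (ball 0 1)"
  unfolding covering_space_def
proof (intro conjI ballI)
  show "continuous_on U f" by (rule contf)
  show fU: "f ` U = ball 0 1"
  proof
    show "f ` U \<subseteq> ball 0 1" unfolding U_def by auto
    show "ball 0 1 \<subseteq> f ` U" using H_img[of True] H_U by (metis image_mono)
  qed
  fix x :: complex assume x: "x \<in> ball 0 1"
  show "\<exists>T. x \<in> T \<and> openin (top_of_set (ball 0 1)) T \<and>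
         (\<exists>v. \<Union> v = U \<inter> f -` T \<and> (\<forall>u\<in>v. openin (top_of_set U) u) \<and> pairwise disjnt v \<and>
              (\<forall>u\<in>v. \<exists>q. homeomorphism u T f q))"
  proof (rule exI[of _ "ball 0 1"], intro conjI)
    show "x \<in> ball 0 1" by (rule x)
    show "openin (top_of_set (ball 0 1)) (ball 0 1)" by simp
    show "\<exists>v. \<Union> v = U \<inter> f -` ball 0 1 \<and> (\<forall>u\<in>v. openin (top_of_set U) u) \<and> pairwise disjnt v \<and>
              (\<forall>u\<in>v. \<exists>q. homeomorphism u (ball 0 1) f q)"
    proof (rule exI[of _ "{H True, H False}"], intro conjI)
    show "\<Union> {H True, H False} = U \<inter> f -` ball 0 1"
    proof
      show "\<Union> {H True, H False} \<subseteq> U \<inter> f -` ball 0 1"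
      proof
        fix z assume "z \<in> \<Union> {H True, H False}"
        then have "z \<in> U" using H_U by blast
        then show "z \<in> U \<inter> f -` ball 0 1" unfolding U_def by simp
      qed
      show "U \<inter> f -` ball 0 1 \<subseteq> \<Union> {H True, H False}"
      proof
        fix z assume "z \<in> U \<inter> f -` ball 0 1"
        then have zU: "z \<in> U" by blast
        then have "Re z \<noteq> 0" by (rule U_re)
        then show "z \<in> \<Union> {H True, H False}" using zU unfolding H_def
          by (cases "Re z > 0") auto
      qed
    qed
    show "\<forall>u\<in>{H True, H False}. openin (top_of_set U) u"
    proof
      fix u assume "u \<in> {H True, H False}"
      then obtain b where "u = H b" by blast
      then show "openin (top_of_set U) u" using open_subset[OF H_U H_open] by simp
    qed
    have "disjnt (H True) (H False)" unfolding disjnt_def H_def by auto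
    then show "pairwise disjnt {H True, H False}"
      by (simp add: pairwise_insert disjnt_sym)
    show "\<forall>u\<in>{H True, H False}. \<exists>q. homeomorphism u (ball 0 1) f q"
    proof
      fix u assume "u \<in> {H True, H False}"
      then obtain b where u: "u = H b" by auto
      have "homeomorphism (H b) (ball 0 1) f (psi b)"
        unfolding homeomorphism_def
      proof (intro conjI ballI)
        show "psi b (f x) = x" if "x \<in> H b" for x using psi(2) that by blast
        show "f ` H b = ball 0 1" by (rule H_img)
        show "continuous_on (H b) f" by (rule contf)
        show "f (psi b y) = y" if "y \<in> ball 0 1" for y using psi(4) that by blast
        show "continuous_on (ball 0 1) (psi b)" using holomorphic_on_imp_continuous_on psi(1) by blast
        show "psi b ` ball 0 1 = H b"
        proof
          show "psi b ` ball 0 1 \<subseteq> H b" using psi(3) by blast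
          show "H b \<subseteq> psi b ` ball 0 1"
          proof
            fix z assume "z \<in> H b"
            then have "z = psi b (f z)" using psi(2) by simp
            moreover have "f z \<in> ball 0 1" using \<open>z \<in> H b\<close> H_img by blast
            ultimately show "z \<in> psi b ` ball 0 1" by blast
          qed
        qed
      qed
      then show "\<exists>q. homeomorphism u (ball 0 1) f q" using u by blast
    qed
  qed
  qed
qed

end


context ql_setup begin

lemma f_iter: "(f ^^ k) (complex_of_real x) = complex_of_real ((real_restr f ^^ k) x)"
  by (induction k) (auto simp: f_real)

lemma g_iter_big: assumes "1 \<le> \<bar>y\<bar>" shows "\<bar>(real_restr f ^^ Suc m) y\<bar> > \<bar>y\<bar>"
proof (induction m)
  case 0
  show ?case using g_big[OF assms] by simp
next
  case (Suc m)
  let ?u = "(real_restr f ^^ Suc m) y"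
  have "1 \<le> \<bar>?u\<bar>" using Suc assms by linarith
  then have "real_restr f ?u > \<bar>?u\<bar>" by (rule g_big)
  then have "\<bar>real_restr f ?u\<bar> > \<bar>?u\<bar>" by linarith
  then show ?case using Suc by simp
qed

lemma per_sup:
  assumes "periodic_point (real_restr f) UNIV x"
  shows "periodic_point f U (complex_of_real x)"
proof -
  obtain n where n: "n \<ge> 1" "(real_restr f ^^ n) x = x"
    using assms unfolding periodic_point_def by blast
  have orb: "\<bar>(real_restr f ^^ k) x\<bar> < 1" for k
  proof (rule ccontr)
    let ?y = "(real_restr f ^^ k) x"
    assume "\<not> ?thesis"
    then have y1: "1 \<le> \<bar>?y\<bar>" by simp
    have "(real_restr f ^^ n) ?y = (real_restr f ^^ (n + k)) x" by (simp add: funpow_add)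
    also have "\<dots> = (real_restr f ^^ k) ((real_restr f ^^ n) x)" by (simp add: funpow_add add.commute)
    also have "\<dots> = ?y" using n by simp
    finally have eq: "(real_restr f ^^ n) ?y = ?y" .
    obtain m where "n = Suc m" using n(1) by (cases n) auto
    then show False using g_iter_big[OF y1, of m] eq by simp
  qed
  have inU: "(f ^^ k) (complex_of_real x) \<in> U" for k
  proof -
    have a: "(f ^^ k) (complex_of_real x) \<in> ball 0 1" using orb[of k] by (simp add: f_iter)
    have "f ((f ^^ k) (complex_of_real x)) = (f ^^ Suc k) (complex_of_real x)" by simp
    also have "\<dots> \<in> ball 0 1" using orb[of "Suc k"] by (simp only: f_iter) simp
    finally show ?thesis using a unfolding U_def by simp
  qed
  have "(f ^^ n) (complex_of_real x) = complex_of_real x" using n by (simp add: f_iter)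
  then show ?thesis unfolding periodic_point_def using inU[of 0] inU n(1) by auto
qed

lemma per_sub:
  assumes "periodic_point f U z"
  shows "z \<in> complex_of_real ` {x. periodic_point (real_restr f) UNIV x}"
proof -
  obtain n where n: "n \<ge> 1" "(f ^^ n) z = z" "\<And>k. k < n \<Longrightarrow> (f ^^ k) z \<in> U"
    using assms unfolding periodic_point_def by blast
  define zk where "zk k = (f ^^ k) z" for k
  define s where "s k = (0 < Re (zk k))" for k
  have zH: "zk k \<in> H (s k)" if "k < n" for k
  proof -
    have "zk k \<in> U" using n(3)[OF that] by (simp add: zk_def)
    moreover have "Re (zk k) \<noteq> 0" using U_re calculation by blast
    ultimately show ?thesis unfolding H_def s_def by auto
  qed
  have zsuc: "zk (Suc k) = f (zk k)" for k by (simp add: zk_def)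
  have zD: "zk (Suc k) \<in> ball 0 1" if "k < n" for k
    using zH[OF that] H_U unfolding zsuc U_def by blast
  have bk: "psi (s k) (zk (Suc k)) = zk k" if "k < n" for k
    using psi(2)[OF zH[OF that]] zsuc by simp
  define R where "R = comp_list (\<lambda>k. psi (s k))"
  have RP: "m < n \<longrightarrow> (R m holomorphic_on ball 0 1 \<and> R m ` ball 0 1 \<subseteq> U \<and> R m (zk (Suc m)) = z \<and>
      (\<forall>w\<in>ball 0 1. R m (cnj w) = cnj (R m w)))" for m
  proof (induction m)
    case 0
    show ?case
    proof
      assume n0: "0 < n"
      have "R 0 = psi (s 0)" by (simp add: R_def)
      moreover have "psi (s 0) (zk (Suc 0)) = z" using bk[OF n0] by (simp add: zk_def)
      ultimately show "R 0 holomorphic_on ball 0 1 \<and> R 0 ` ball 0 1 \<subseteq> U \<and> R 0 (zk (Suc 0)) = z \<and>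
      (\<forall>w\<in>ball 0 1. R 0 (cnj w) = cnj (R 0 w))"
        using psi(1) psi_U psi_cnj by simp
    qed
  next
    case (Suc m)
    show ?case
    proof
      assume mn: "Suc m < n"
      then have IH: "R m holomorphic_on ball 0 1" "R m ` ball 0 1 \<subseteq> U" "R m (zk (Suc m)) = z"
        "\<And>w. w \<in> ball 0 1 \<Longrightarrow> R m (cnj w) = cnj (R m w)" using Suc by auto
      have RS: "R (Suc m) = R m \<circ> psi (s (Suc m))" by (simp add: R_def)
      have psiD: "psi (s (Suc m)) ` ball 0 1 \<subseteq> ball 0 1" using psi_D by blast
      have h: "R (Suc m) holomorphic_on ball 0 1"
        unfolding RS by (rule holomorphic_on_compose_gen[OF psi(1) IH(1) psiD])
      have i: "R (Suc m) ` ball 0 1 \<subseteq> U"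
        using IH(2) psiD unfolding RS by (auto simp del: mem_ball_0)
      have v: "R (Suc m) (zk (Suc (Suc m))) = z"
        unfolding RS using bk[OF mn] IH(3) by simp
      have cj: "\<forall>w\<in>ball 0 1. R (Suc m) (cnj w) = cnj (R (Suc m) w)"
      proof
        fix w :: complex assume w: "w \<in> ball 0 1"
        have "R (Suc m) (cnj w) = R m (cnj (psi (s (Suc m)) w))" unfolding RS using psi_cnj[OF w] by simp
        also have "\<dots> = cnj (R m (psi (s (Suc m)) w))" using IH(4) psi_D[OF w] by blast
        finally show "R (Suc m) (cnj w) = cnj (R (Suc m) w)" unfolding RS by simp
      qed
      show "R (Suc m) holomorphic_on ball 0 1 \<and> R (Suc m) ` ball 0 1 \<subseteq> U \<and> R (Suc m) (zk (Suc (Suc m))) = z \<and>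
        (\<forall>w\<in>ball 0 1. R (Suc m) (cnj w) = cnj (R (Suc m) w))" using h i v cj by blast
    qed
  qed
  define m where "m = n - 1"
  have mn: "m < n" "Suc m = n" using n(1) by (auto simp: m_def)
  have Rm: "R m holomorphic_on ball 0 1" "R m ` ball 0 1 \<subseteq> U" "R m (zk (Suc m)) = z"
    "\<And>w. w \<in> ball 0 1 \<Longrightarrow> R m (cnj w) = cnj (R m w)" using RP[of m] mn by auto
  have zn: "zk (Suc m) = z" using mn n(2) by (simp add: zk_def)
  have zD1: "z \<in> ball 0 1" using n(3)[of 0] n(1) unfolding U_def by simp
  have czD: "cnj z \<in> ball 0 1" using zD1 by simp
  have fix1: "R m z = z" using Rm(3) zn by simp
  have fix2: "R m (cnj z) = cnj z" using Rm(4)[OF zD1] fix1 by simp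
  have "R m ` ball 0 1 \<subseteq> closure U" using Rm(2) closure_subset by blast
  then have "cnj z = z"
    using fixpoint_unique[OF Rm(1) conjunct1[OF U_closure] conjunct2[OF U_closure] _ czD zD1 fix2 fix1]
    by blast
  then have zr: "z = complex_of_real (Re z)" by (metis Reals_cnj_iff of_real_Re)
  have "complex_of_real ((real_restr f ^^ n) (Re z)) = complex_of_real (Re z)"
    using n(2) zr f_iter[of n "Re z"] by simp
  then have "(real_restr f ^^ n) (Re z) = Re z" by simp
  then have "periodic_point (real_restr f) UNIV (Re z)" unfolding periodic_point_def using n(1) by blast
  then show ?thesis using zr by blast
qed

lemma main:
  "escaping_quadratic_like f (f -` ball 0 1 \<inter> ball 0 1) (ball 0 1)
     \<and> {z. periodic_point f (f -` ball 0 1 \<inter> ball 0 1) z}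
         = complex_of_real ` {x. periodic_point (real_restr f) UNIV x}"
proof
  show "escaping_quadratic_like f (f -` ball 0 1 \<inter> ball 0 1) (ball 0 1)"
    unfolding escaping_quadratic_like_def U_def[symmetric]
    using U_ne U_open U_closure cov U_card holomorphic_on_subset[OF hol]
    by (auto intro!: convex_imp_simply_connected)
  show "{z. periodic_point f (f -` ball 0 1 \<inter> ball 0 1) z}
         = complex_of_real ` {x. periodic_point (real_restr f) UNIV x}"
    unfolding U_def[symmetric] using per_sub per_sup by blast
qed

end

theorem lemma4p4:
  fixes f :: "complex \<Rightarrow> complex"
  assumes "in_B f"
    and "convex_on UNIV (real_restr f)"
    and "quadratic_like f (ball 0 1) (f ` ball 0 1)"
    and "f 0 \<in> complex_of_real ` {..< -1}"
  shows "escaping_quadratic_like f (f -` ball 0 1 \<inter> ball 0 1) (ball 0 1)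
     \<and> {z. periodic_point f (f -` ball 0 1 \<inter> ball 0 1) z}
         = complex_of_real ` {x. periodic_point (real_restr f) UNIV x}"
proof -
  obtain c where c: "f 0 = complex_of_real c" "c < -1" using assms(4) by auto
  interpret ql_setup f c
  proof
    show "f holomorphic_on UNIV" using assms(1) unfolding in_B_def by blast
    show "\<And>z. f (cnj z) = cnj (f z)" using assms(1) unfolding in_B_def by blast
    show "\<And>z. f (- z) = f z" using assms(1) unfolding in_B_def by blast
  qed (use assms c in auto)
  show ?thesis by (rule main)
qed

end
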